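(* Let $d\geq 3$ and let $P$ be the standard pattern of $Q_d$. Then any ordering of the vertices of $P$ as a sequence $(v_1,\ldots,v_m)$ is an $L$-sequence, i.e., for each $i$ there is $u_i\in N[v_i]$ with $u_i\notin N(v_j)$ for all $j<i$.
   Context: $Q_d$ is the $d$-dimensional hypercube: vertices are the $0$-$1$ strings of length $d$, two strings adjacent iff they differ in exactly one position. $N(v)$ is the open neighborhood, $N[v]=N(v)\cup\{v\}$. Partition $Q_d$ into $2^{d-3}$ subcubes, each consisting of the 8 strings sharing a fixed prefix $*\in\{0,1\}^{d-3}$ in the first $d-3$ positions. Pattern A of a subcube with prefix $*$ is $\{*000,*011,*101,*110\}$ and Pattern B is $\{*001,*010,*100,*111\}$. The cube distance between two subcubes is the Hamming distance between their prefixes. Let $Q_1$ denote the subcube with prefix $0^{d-3}$. The standard pattern is the set consisting of the Pattern A vertices of all subcubes at even cube distance from $Q_1$ together with the Pattern B vertices of all subcubes at odd cube distance from $Q_1$. *)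

theory Defs
  imports Main
begin

text \<open>Vertices of Q_d: 0-1 strings of length d, as bool lists (True = 1).\<close>
definition hypercube :: "nat \<Rightarrow> bool list set" where
  "hypercube d = {xs. length xs = d}"

definition hamming :: "bool list \<Rightarrow> bool list \<Rightarrow> nat" where
  "hamming xs ys = card {i. i < length xs \<and> xs ! i \<noteq> ys ! i}"

definition cube_adj :: "bool list \<Rightarrow> bool list \<Rightarrow> bool" where
  "cube_adj xs ys \<longleftrightarrow> length xs = length ys \<and> hamming xs ys = 1"

definition open_nbhd :: "nat \<Rightarrow> bool list \<Rightarrow> bool list set" where
  "open_nbhd d v = {u \<in> hypercube d. cube_adj v u}"

definition closed_nbhd :: "nat \<Rightarrow> bool list \<Rightarrow> bool list set" where
  "closed_nbhd d v = insert v (open_nbhd d v)"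

definition patternA :: "bool list \<Rightarrow> bool list set" where
  "patternA p = (\<lambda>s. p @ s) ` {[False,False,False],[False,True,True],[True,False,True],[True,True,False]}"

definition patternB :: "bool list \<Rightarrow> bool list set" where
  "patternB p = (\<lambda>s. p @ s) ` {[False,False,True],[False,True,False],[True,False,False],[True,True,True]}"

text \<open>Cube distance between subcubes = Hamming distance of prefixes; Q_1 has prefix 0^(d-3).\<close>
definition standard_pattern :: "nat \<Rightarrow> bool list set" where
  "standard_pattern d =
     (\<Union>p \<in> {p. length p = d - 3}.
        if even (hamming p (replicate (d - 3) False)) then patternA p else patternB p)"

definition L_sequence :: "nat \<Rightarrow> bool list list \<Rightarrow> bool" where
  "L_sequence d vs \<longleftrightarrow>
     (\<forall>i < length vs. \<exists>u \<in> closed_nbhd d (vs ! i). \<forall>j < i. u \<notin> open_nbhd d (vs ! j))"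

end

theory Submission
  imports Defs
begin

lemma set_Suc_split:
  "{i. i < Suc n \<and> P i} = (if P 0 then {0} else {}) \<union> Suc ` {i. i < n \<and> P (Suc i)}"
  by (auto simp: image_iff less_Suc_eq_0_disj)

lemma hamming_Cons:
  "hamming (x#xs) (y#ys) = (if x \<noteq> y then 1 else 0) + hamming xs ys"
proof -
  have "{i. i < length (x#xs) \<and> (x#xs) ! i \<noteq> (y#ys) ! i}
      = (if x \<noteq> y then {0} else {}) \<union> Suc ` {i. i < length xs \<and> xs ! i \<noteq> ys ! i}"
    using set_Suc_split[of "length xs" "\<lambda>i. (x#xs) ! i \<noteq> (y#ys) ! i"] by simp
  moreover have "card ((if x \<noteq> y then {0} else {}) \<union> Suc ` {i. i < length xs \<and> xs ! i \<noteq> ys ! i})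
     = (if x \<noteq> y then 1 else 0) + card {i. i < length xs \<and> xs ! i \<noteq> ys ! i}"
    by (subst card_Un_disjoint) (auto simp: card_image)
  ultimately show ?thesis unfolding hamming_def by simp
qed

lemma hamming_parity:
  "length xs = length ys \<Longrightarrow> even (hamming xs ys + count_list xs True + count_list ys True)"
proof (induction xs ys rule: list_induct2)
  case Nil
  then show ?case by (simp add: hamming_def)
next
  case (Cons x xs y ys)
  then show ?case by (cases x; cases y) (auto simp: hamming_Cons)
qed

lemma hamming_zero: "hamming p (replicate (length p) False) = count_list p True"
proof (induction p)
  case Nil
  then show ?case by (simp add: hamming_def)
next
  case (Cons a p)
  then show ?case by (cases a) (auto simp: hamming_Cons)
qed

lemma standard_even:
  assumes "v \<in> standard_pattern d"
  shows "even (count_list v True)"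
proof -
  obtain p where p: "length p = d - 3"
    and v: "v \<in> (if even (hamming p (replicate (d - 3) False)) then patternA p else patternB p)"
    using assms unfolding standard_pattern_def by auto
  have h: "hamming p (replicate (d - 3) False) = count_list p True"
    using hamming_zero[of p] p by simp
  show ?thesis
  proof (cases "even (count_list p True)")
    case True
    then show ?thesis using v h by (auto simp: patternA_def)
  next
    case False
    then show ?thesis using v h by (auto simp: patternB_def)
  qed
qed

theorem mainTheorem8:
  fixes d :: nat and vs :: "bool list list"
  assumes "d \<ge> 3"
    and "distinct vs"
    and "set vs = standard_pattern d"
  shows "L_sequence d vs"
  unfolding L_sequence_def
proof (intro allI impI)
  fix i assume i: "i < length vs"
  show "\<exists>u \<in> closed_nbhd d (vs ! i). \<forall>j < i. u \<notin> open_nbhd d (vs ! j)"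
  proof (intro bexI allI impI)
    show "vs ! i \<in> closed_nbhd d (vs ! i)" by (simp add: closed_nbhd_def)
  next
    fix j assume j: "j < i"
    have ei: "even (count_list (vs ! i) True)"
      using standard_even assms(3) i nth_mem by blast
    have ej: "even (count_list (vs ! j) True)"
      using standard_even assms(3) i j nth_mem by (metis less_trans)
    show "vs ! i \<notin> open_nbhd d (vs ! j)"
    proof
      assume "vs ! i \<in> open_nbhd d (vs ! j)"
      then have "length (vs ! j) = length (vs ! i)" "hamming (vs ! j) (vs ! i) = 1"
        by (auto simp: open_nbhd_def cube_adj_def)
      then show False using hamming_parity[of "vs ! j" "vs ! i"] ei ej by simp
    qed
  qed
qed

end
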